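(* Let $\psi^{(A)}$ and $\psi^{(B)}$ be neighbor functions and let $\sigma^{(A)},\sigma^{(B)}$ be positive numbers. Then $\psi^{(A)}$ and $\psi^{(B)}$ are continuously differentiable almost everywhere. Set $\sigma^*=1$ and define $\psi^*$ by $$\frac{d\psi^*(x)}{dx}=\max\left(\frac{1}{\sigma^{(A)}}\frac{d\psi^{(A)}(x)}{dx},\ \frac{1}{\sigma^{(B)}}\frac{d\psi^{(B)}(x)}{dx}\right),\qquad \psi^*(x)=\int_0^x\frac{d\psi^*(s)}{ds}\,ds.$$ Then $\psi^*$ is a neighbor function, and for every $x\geq 0$ we have $I_{\psi^{(A)},\sigma^{(A)}}(x)\supseteq I_{\psi^*,\sigma^*}(x)$ and $I_{\psi^{(B)},\sigma^{(B)}}(x)\supseteq I_{\psi^*,\sigma^*}(x)$.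
   Context: A neighbor function is a function $\psi:\mathbb{R}_{\geq 0}\to\mathbb{R}$ that is (i) strictly increasing, (ii) continuous, (iii) concave, and (iv) such that $g(x)=\psi(e^{x})$ is convex as a function of $x\in\mathbb{R}$. For a neighbor function $\psi$, a number $\sigma\geq 0$ and $y\geq 0$, the uncertainty interval around $y$ is $I_{\psi,\sigma}(y)=\big[\psi^{-1}(\max(\psi(0),\psi(y)-\sigma)),\ \psi^{-1}(\psi(y)+\sigma)\big]$. *)

theory Defs
  imports "HOL-Analysis.Analysis"
begin

definition neighbor_function :: "(real \<Rightarrow> real) \<Rightarrow> bool" where
  "neighbor_function \<psi> \<longleftrightarrow>
     strict_mono_on {0..} \<psi> \<and> continuous_on {0..} \<psi> \<and> concave_on {0..} \<psi> \<and>
     convex_on UNIV (\<lambda>x. \<psi> (exp x))"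

definition uncertainty_interval :: "(real \<Rightarrow> real) \<Rightarrow> real \<Rightarrow> real \<Rightarrow> real set" where
  "uncertainty_interval \<psi> \<sigma> y =
     {inv_into {0..} \<psi> (max (\<psi> 0) (\<psi> y - \<sigma>)) .. inv_into {0..} \<psi> (\<psi> y + \<sigma>)}"

definition C1_ae :: "(real \<Rightarrow> real) \<Rightarrow> bool" where
  "C1_ae \<psi> \<longleftrightarrow> (\<exists>N. N \<in> null_sets lborel \<and>
      (\<forall>x\<in>{0<..} - N. \<psi> differentiable at x) \<and> continuous_on ({0<..} - N) (deriv \<psi>))"

definition psi_star :: "(real \<Rightarrow> real) \<Rightarrow> real \<Rightarrow> (real \<Rightarrow> real) \<Rightarrow> real \<Rightarrow> real \<Rightarrow> real" where
  "psi_star \<psi>A \<sigma>A \<psi>B \<sigma>B x =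
     (LBINT s=0..x. max (deriv \<psi>A s / \<sigma>A) (deriv \<psi>B s / \<sigma>B))"

end

theory Submission
  imports Defs
begin

lemma convex_from_slopes:
  fixes F :: "real \<Rightarrow> real"
  assumes A: "convex A"
    and sl: "\<And>x y z. x \<in> A \<Longrightarrow> z \<in> A \<Longrightarrow> x < y \<Longrightarrow> y < z \<Longrightarrow>
              (F y - F x) / (y - x) \<le> (F z - F y) / (z - y)"
  shows "convex_on A F"
proof (rule convex_on_linorderI[OF _ A])
  fix t x y :: real
  assume t: "0 < t" "t < 1" and xy: "x \<in> A" "y \<in> A" "x < y"
  define z where "z = (1 - t) * x + t * y"
  have zx: "z - x = t * (y - x)" by (simp add: z_def algebra_simps)
  have yz: "y - z = (1 - t) * (y - x)" by (simp add: z_def algebra_simps)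
  have p1: "0 < t * (y - x)" using t xy by simp
  have p2: "0 < (1 - t) * (y - x)" using t xy by simp
  have "x < z" using zx p1 by linarith
  have "z < y" using yz p2 by linarith
  have "(F z - F x) / (z - x) \<le> (F y - F z) / (y - z)"
    using sl[OF xy(1) xy(2) \<open>x < z\<close> \<open>z < y\<close>] .
  then have "(F z - F x) * (y - z) \<le> (F y - F z) * (z - x)"
    using \<open>x < z\<close> \<open>z < y\<close> by (simp add: divide_le_eq le_divide_eq field_simps)
  then have "(F z - F x) * (1 - t) \<le> (F y - F z) * t"
    unfolding zx yz using xy by (simp add: mult.assoc[symmetric] mult_right_le_imp_le)
  moreover have "(1 - t) *\<^sub>R x + t *\<^sub>R y = z" by (simp add: z_def)
  ultimately show "F ((1 - t) *\<^sub>R x + t *\<^sub>R y) \<le> (1 - t) * F x + t * F y"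
    by (simp add: algebra_simps)
qed

lemma concave_from_slopes:
  fixes F :: "real \<Rightarrow> real"
  assumes A: "convex A"
    and sl: "\<And>x y z. x \<in> A \<Longrightarrow> z \<in> A \<Longrightarrow> x < y \<Longrightarrow> y < z \<Longrightarrow>
              (F z - F y) / (z - y) \<le> (F y - F x) / (y - x)"
  shows "concave_on A F"
  unfolding concave_on_def
proof (rule convex_from_slopes[OF A])
  fix x y z assume "x \<in> A" "z \<in> A" "x < y" "y < z"
  from sl[OF this] show "(- F y - - F x) / (y - x) \<le> (- F z - - F y) / (z - y)"
    by (simp add: diff_divide_distrib)
qed

definition lder :: "(real \<Rightarrow> real) \<Rightarrow> real \<Rightarrow> real" where
  "lder f s = (if 0 < s then Inf ((\<lambda>a. (f s - f a) / (s - a)) ` {0<..<s}) else 0)"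

locale nbf =
  fixes f :: "real \<Rightarrow> real"
  assumes nf: "neighbor_function f"
begin

lemma smono: "0 \<le> x \<Longrightarrow> x < y \<Longrightarrow> f x < f y"
  using nf unfolding neighbor_function_def by (auto simp: strict_mono_on_def)

lemma wmono: "0 \<le> x \<Longrightarrow> x \<le> y \<Longrightarrow> f x \<le> f y"
  using smono by (cases "x = y") (auto intro: less_imp_le)

lemma cont: "continuous_on {0..} f"
  using nf unfolding neighbor_function_def by auto

lemma conc: "concave_on {0..} f"
  using nf unfolding neighbor_function_def by auto

lemma cvxG: "convex_on UNIV (\<lambda>x. f (exp x))"
  using nf unfolding neighbor_function_def by auto

lemma CS:
  assumes "0 \<le> p" "p < q" "q < w"
  shows "(f w - f q) / (w - q) \<le> (f w - f p) / (w - p)"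
    and "(f w - f p) / (w - p) \<le> (f q - f p) / (q - p)"
proof -
  have cv: "convex_on {0..} (\<lambda>x. - f x)" using conc by (simp add: concave_on_def)
  have 1: "(- f p - - f q) / (p - q) \<le> (- f p - - f w) / (p - w)"
   and 2: "(- f p - - f w) / (p - w) \<le> (- f q - - f w) / (q - w)"
    using convex_on_slope_le[OF cv, of p w q] assms by auto
  have e1: "(- f p - - f q) / (p - q) = - ((f q - f p) / (q - p))"
    using assms by (simp add: field_simps)
  have e2: "(- f p - - f w) / (p - w) = - ((f w - f p) / (w - p))"
    using assms by (simp add: field_simps)
  have e3: "(- f q - - f w) / (q - w) = - ((f w - f q) / (w - q))"
    using assms by (simp add: field_simps)
  show "(f w - f q) / (w - q) \<le> (f w - f p) / (w - p)" using 2 unfolding e2 e3 by simp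
  show "(f w - f p) / (w - p) \<le> (f q - f p) / (q - p)" using 1 unfolding e1 e2 by simp
qed

lemma sl_pos: "0 \<le> a \<Longrightarrow> a < b \<Longrightarrow> 0 < (f b - f a) / (b - a)"
  using smono by simp

lemma R1:
  assumes "0 < a" "a < b"
  shows "lder f b \<le> (f b - f a) / (b - a)" "(f b - f a) / (b - a) \<le> lder f a"
proof -
  let ?S = "\<lambda>s. (\<lambda>t. (f s - f t) / (s - t)) ` {0<..<s}"
  have bdd: "bdd_below (?S b)"
  proof (rule bdd_belowI)
    fix v assume "v \<in> ?S b"
    then obtain t where t: "0 < t" "t < b" "v = (f b - f t) / (b - t)" by auto
    have "(f (b+1) - f b) / (b + 1 - b) \<le> (f (b+1) - f t) / (b + 1 - t)"
      using CS(1)[of t b "b+1"] t by simp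
    also have "\<dots> \<le> (f b - f t) / (b - t)"
      using CS(2)[of t b "b+1"] t by simp
    finally show "(f (b+1) - f b) / (b + 1 - b) \<le> v" using t by simp
  qed
  have "lder f b = Inf (?S b)" using assms by (simp add: lder_def)
  also have "\<dots> \<le> (f b - f a) / (b - a)"
    by (rule cInf_lower[OF _ bdd]) (use assms in auto)
  finally show "lder f b \<le> (f b - f a) / (b - a)" .
  have "(f b - f a) / (b - a) \<le> Inf (?S a)"
  proof (rule cInf_greatest)
    show "?S a \<noteq> {}" using assms by auto
    fix v assume "v \<in> ?S a"
    then obtain t where t: "0 < t" "t < a" "v = (f a - f t) / (a - t)" by auto
    have "(f b - f a) / (b - a) \<le> (f b - f t) / (b - t)"
      using CS(1)[of t a b] t assms by simp
    also have "\<dots> \<le> (f a - f t) / (a - t)"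
      using CS(2)[of t a b] t assms by simp
    finally show "(f b - f a) / (b - a) \<le> v" using t by simp
  qed
  then show "(f b - f a) / (b - a) \<le> lder f a" using assms by (simp add: lder_def)
qed

lemma lder_pos: "0 < s \<Longrightarrow> 0 < lder f s"
  using R1(2)[of s "s+1"] sl_pos[of s "s+1"] by simp

lemma lder_nonneg: "0 \<le> lder f s"
  using lder_pos[of s] by (cases "0 < s") (auto simp: lder_def)

lemma lder_anti: "0 < a \<Longrightarrow> a \<le> b \<Longrightarrow> lder f b \<le> lder f a"
  using R1[of a b] by (cases "a = b") auto


lemma deriv_at:
  assumes s: "0 < s" and c: "isCont (lder f) s"
  shows "(f has_real_derivative lder f s) (at s)"
  unfolding has_field_derivative_iff
proof (rule tendsto_sandwich[of "\<lambda>y. min (lder f s) (lder f y)" _ _ "\<lambda>y. max (lder f s) (lder f y)"])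
  have e1: "\<forall>\<^sub>F y in at s. 0 < y" using order_tendstoD(1)[OF tendsto_ident_at s] .
  have e2: "\<forall>\<^sub>F y in at s. y \<noteq> s" by (simp add: eventually_at_filter)
  have pw: "min (lder f s) (lder f y) \<le> (f y - f s) / (y - s) \<and> (f y - f s) / (y - s) \<le> max (lder f s) (lder f y)"
    if y: "0 < y" "y \<noteq> s" for y
  proof (cases "y < s")
    case True
    have eq: "(f y - f s) / (y - s) = (f s - f y) / (s - y)" using True by (simp add: field_simps)
    show ?thesis using R1[of y s] True y unfolding eq by auto
  next
    case False
    then have "s < y" using y by simp
    then show ?thesis using R1[of s y] s by auto
  qed
  show "\<forall>\<^sub>F y in at s. min (lder f s) (lder f y) \<le> (f y - f s) / (y - s)"
    using eventually_conj[OF e1 e2] by eventually_elim (use pw in blast)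
  show "\<forall>\<^sub>F y in at s. (f y - f s) / (y - s) \<le> max (lder f s) (lder f y)"
    using eventually_conj[OF e1 e2] by eventually_elim (use pw in blast)
  have "(lder f \<longlongrightarrow> lder f s) (at s)" using c by (simp add: isCont_def)
  from tendsto_min[OF tendsto_const[of "lder f s"] this] show "((\<lambda>y. min (lder f s) (lder f y)) \<longlongrightarrow> lder f s) (at s)" by simp
  from tendsto_max[OF tendsto_const[of "lder f s"] \<open>(lder f \<longlongrightarrow> lder f s) (at s)\<close>]
  show "((\<lambda>y. max (lder f s) (lder f y)) \<longlongrightarrow> lder f s) (at s)" by simp
qed

definition bad :: "real set" where "bad = {s \<in> {0<..}. \<not> isCont (lder f) s}"

lemma bad_countable: "countable bad"
proof -
  have "mono_on {0<..} (\<lambda>s. - lder f s)"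
    by (rule mono_onI) (use lder_anti in auto)
  from mono_on_ctble_discont_open[OF _ this]
  have "countable {a \<in> {0<..}. \<not> isCont (\<lambda>s. - lder f s) a}" by simp
  moreover have "bad \<subseteq> {a \<in> {0<..}. \<not> isCont (\<lambda>s. - lder f s) a}"
  proof
    fix a assume "a \<in> bad"
    then have "a > 0" "\<not> isCont (lder f) a" by (auto simp: bad_def)
    moreover have "isCont (\<lambda>s. - lder f s) a \<Longrightarrow> isCont (lder f) a"
      using isCont_minus[of a "\<lambda>s. - lder f s"] by simp
    ultimately show "a \<in> {a \<in> {0<..}. \<not> isCont (\<lambda>s. - lder f s) a}" by auto
  qed
  ultimately show ?thesis using countable_subset by blast
qed

lemma good_deriv: "0 < s \<Longrightarrow> s \<notin> bad \<Longrightarrow> (f has_real_derivative lder f s) (at s)"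
  using deriv_at by (auto simp: bad_def)

lemma good_deriv_eq: "0 < s \<Longrightarrow> s \<notin> bad \<Longrightarrow> deriv f s = lder f s"
  using good_deriv DERIV_imp_deriv by blast

lemma C1: "C1_ae f"
  unfolding C1_ae_def
proof (intro exI conjI ballI)
  show "bad \<in> null_sets lborel" using bad_countable countable_imp_null_set_lborel by blast
  fix x assume "x \<in> {0<..} - bad"
  then show "f differentiable at x" using good_deriv real_differentiable_def by auto
next
  have "continuous_on ({0<..} - bad) (lder f)"
    by (rule continuous_at_imp_continuous_on) (auto simp: bad_def)
  then show "continuous_on ({0<..} - bad) (deriv f)"
    by (rule continuous_on_cong[THEN iffD1, rotated 2]) (auto simp: good_deriv_eq)
qed


lemma lder_int: "0 < a \<Longrightarrow> lder f integrable_on {a..b}"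
proof -
  assume a: "0 < a"
  have "mono_on {a..b} (\<lambda>s. - lder f s)"
    by (rule mono_onI) (use lder_anti a in auto)
  from integrable_on_mono_on[OF this] have "(\<lambda>s. - lder f s) integrable_on {a..b}" .
  from integrable_neg[OF this] show ?thesis by simp
qed

lemma E_bound:
  assumes a: "0 < a" "a \<le> b"
  shows "\<bar>integral {a..b} (lder f) - (f b - f a)\<bar> \<le> (b - a) * (lder f a - lder f b)"
proof (cases "a = b")
  case True then show ?thesis by simp
next
  case False
  then have ab: "a < b" using a by simp
  have I: "lder f integrable_on {a..b}" using lder_int a by blast
  have lo: "(b - a) * lder f b \<le> integral {a..b} (lder f)"
  proof -
    have "integral {a..b} (\<lambda>_. lder f b) \<le> integral {a..b} (lder f)"
      by (rule integral_le[OF integrable_const_ivl I]) (use lder_anti a in auto)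
    then show ?thesis using ab by simp
  qed
  have hi: "integral {a..b} (lder f) \<le> (b - a) * lder f a"
  proof -
    have "integral {a..b} (lder f) \<le> integral {a..b} (\<lambda>_. lder f a)"
      by (rule integral_le[OF I integrable_const_ivl]) (use lder_anti a in auto)
    then show ?thesis using ab by simp
  qed
  have s1: "lder f b \<le> (f b - f a) / (b - a)" "(f b - f a) / (b - a) \<le> lder f a"
    using R1[OF a(1) ab] by auto
  have "(b - a) * lder f b \<le> f b - f a"
    using s1(1) ab by (simp add: le_divide_eq mult.commute)
  moreover have "f b - f a \<le> (b - a) * lder f a"
    using s1(2) ab by (simp add: divide_le_eq mult.commute)
  ultimately show ?thesis using lo hi by (simp add: abs_le_iff algebra_simps)
qed

lemma FTC_pos:
  assumes x: "0 < x" "x \<le> y"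
  shows "integral {x..y} (lder f) = f y - f x"
proof -
  define E where "E a b = integral {a..b} (lder f) - (f b - f a)" for a b
  have add: "E x q = E x p + E p q" if "x \<le> p" "p \<le> q" for p q
  proof -
    have "integral {x..p} (lder f) + integral {p..q} (lder f) = integral {x..q} (lder f)"
      using Henstock_Kurzweil_Integration.integral_combine[where a=x and c=p and b=q and f="lder f"] that lder_int[of x q] x by auto
    then show ?thesis unfolding E_def by simp
  qed
  have bnd: "\<bar>E x y\<bar> \<le> (y - x) / real n * (lder f x - lder f y)" if n: "n \<ge> 1" for n :: nat
  proof -
    define h where "h = (y - x) / real n"
    have h0: "0 \<le> h" using x n by (simp add: h_def)
    have "\<bar>E x (x + real k * h)\<bar> \<le> h * (lder f x - lder f (x + real k * h))" if "k \<le> n" for k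
      using that
    proof (induction k)
      case 0 then show ?case by (simp add: E_def)
    next
      case (Suc k)
      let ?p = "x + real k * h" and ?q = "x + real (Suc k) * h"
      have pq: "x \<le> ?p" "?p \<le> ?q" "?q - ?p = h" using h0 by (auto simp: algebra_simps)
      have "\<bar>E ?p ?q\<bar> \<le> (?q - ?p) * (lder f ?p - lder f ?q)"
        unfolding E_def by (rule E_bound) (use pq x h0 in \<open>auto intro: add_pos_nonneg\<close>)
      then have "\<bar>E ?p ?q\<bar> \<le> h * (lder f ?p - lder f ?q)" using pq by simp
      moreover have "\<bar>E x ?p\<bar> \<le> h * (lder f x - lder f ?p)" using Suc by simp
      moreover have "E x ?q = E x ?p + E ?p ?q" by (rule add) (use pq in auto)
      ultimately show ?case by (simp add: algebra_simps abs_le_iff)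
    qed
    from this[of n] have "\<bar>E x (x + real n * h)\<bar> \<le> h * (lder f x - lder f (x + real n * h))" by simp
    moreover have "x + real n * h = y" using n by (simp add: h_def)
    ultimately show ?thesis by (simp add: h_def)
  qed
  have "E x y = 0"
  proof (rule ccontr)
    assume ne: "E x y \<noteq> 0"
    define D where "D = (y - x) * (lder f x - lder f y)"
    have D0: "0 \<le> D" using lder_anti[of x y] x by (simp add: D_def)
    obtain n :: nat where n: "D / \<bar>E x y\<bar> < real n" using reals_Archimedean2 by blast
    have n1: "n \<ge> 1"
    proof (rule ccontr)
      assume "\<not> n \<ge> 1" then have "n = 0" by simp
      then show False using n D0 ne by (simp add: divide_less_0_iff)
    qed
    have "\<bar>E x y\<bar> \<le> D / real n" using bnd[OF n1] by (simp add: D_def)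
    moreover have "D / real n < \<bar>E x y\<bar>"
      using n n1 ne by (simp add: divide_less_eq field_simps)
    ultimately show False by simp
  qed
  then show ?thesis by (simp add: E_def)
qed


lemma FTC0:
  assumes y: "0 < y"
  shows "lder f integrable_on {0..y} \<and> integral {0..y} (lder f) = f y - f 0"
proof -
  define e where "e k = y / real (k + 2)" for k :: nat
  have e0: "0 < e k" for k using y by (simp add: e_def)
  have ey: "e k < y" for k using y by (simp add: e_def divide_less_eq)
  have emono: "e (Suc k) \<le> e k" for k using y by (simp add: e_def frac_le)
  have elim: "e \<longlonglongrightarrow> 0"
    unfolding e_def using LIMSEQ_ignore_initial_segment[OF lim_const_over_n[of y], of 2] by simp
  define g where "g k s = (if s \<in> {e k..} then lder f s else 0)" for k s
  have int_g: "g k integrable_on {0..y}" for k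
  proof -
    have "{e k..} \<inter> {0..y} = {e k..y}" using e0[of k] by auto
    then show ?thesis unfolding g_def
      using integrable_restrict_Int[of "{e k..}" "lder f" "{0..y}"] lder_int[OF e0[of k], of y] e0[of k]
      by (simp add: max_absorb1 less_imp_le)
  qed
  have igk: "integral {0..y} (g k) = f y - f (e k)" for k
  proof -
    have "{e k..} \<inter> {0..y} = {e k..y}" using e0[of k] by auto
    then have "integral {0..y} (g k) = integral {e k..y} (lder f)"
      unfolding g_def using Henstock_Kurzweil_Integration.integral_restrict_Int[of "{0..y}" "{e k..}" "lder f"] e0[of k]
      by (simp add: max_absorb1 less_imp_le)
    also have "\<dots> = f y - f (e k)" using FTC_pos[OF e0[of k]] ey[of k] by simp
    finally show ?thesis .
  qed
  have mono_g: "g k s \<le> g (Suc k) s" if "s \<in> {0..y}" for k s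
    using emono[of k] lder_nonneg[of s] by (auto simp: g_def)
  have lim_g: "(\<lambda>k. g k s) \<longlonglongrightarrow> lder f s" if s: "s \<in> {0..y}" for s
  proof (cases "s = 0")
    case True
    then have "g k s = lder f s" for k using e0[of k] by (simp add: g_def lder_def)
    then show ?thesis by simp
  next
    case False
    then have "0 < s" using s by simp
    from order_tendstoD(2)[OF elim this] have "\<forall>\<^sub>F k in sequentially. e k < s" .
    then have "\<forall>\<^sub>F k in sequentially. g k s = lder f s"
      by eventually_elim (simp add: g_def)
    then show ?thesis by (rule tendsto_eventually)
  qed
  have bnd: "bounded (range (\<lambda>k. integral {0..y} (g k)))"
  proof (rule bounded_subset[OF bounded_closed_interval[of 0 "f y - f 0"]])
    show "range (\<lambda>k. integral {0..y} (g k)) \<subseteq> {0..f y - f 0}"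
      using wmono[of 0 "e _"] wmono[of "e _" y] e0 ey by (auto simp: igk less_imp_le)
  qed
  from monotone_convergence_increasing[OF int_g mono_g lim_g bnd]
  have mc: "lder f integrable_on {0..y}" "(\<lambda>k. integral {0..y} (g k)) \<longlonglongrightarrow> integral {0..y} (lder f)"
    by auto
  have "(\<lambda>k. f (e k)) \<longlonglongrightarrow> f 0"
    by (rule continuous_on_tendsto_compose[OF cont elim]) (use e0 in \<open>auto intro!: always_eventually less_imp_le\<close>)
  then have "(\<lambda>k. integral {0..y} (g k)) \<longlonglongrightarrow> f y - f 0"
    unfolding igk by (intro tendsto_intros)
  with mc(2) have "integral {0..y} (lder f) = f y - f 0" using LIMSEQ_unique by blast
  with mc(1) show ?thesis by simp
qed

lemma FTC:
  assumes "0 \<le> x" "x \<le> y"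
  shows "(lder f has_integral (f y - f x)) {x..y}"
proof (cases "0 < x")
  case True
  then show ?thesis using FTC_pos[OF True assms(2)] lder_int[OF True, of y]
    by (metis has_integral_integrable_integral)
next
  case False
  then have x0: "x = 0" using assms by simp
  show ?thesis
  proof (cases "y = 0")
    case True then show ?thesis using x0 by (simp add: has_integral_refl)
  next
    case False
    then have "0 < y" using assms x0 by simp
    from FTC0[OF this] show ?thesis using x0 by (metis has_integral_integrable_integral)
  qed
qed


lemma Gsl:
  assumes "0 < p" "p < q" "q < w"
  shows "(f q - f p) / (ln q - ln p) \<le> (f w - f p) / (ln w - ln p)"
    and "(f w - f p) / (ln w - ln p) \<le> (f w - f q) / (ln w - ln q)"
proof -
  have lt: "ln p < ln q" "ln q < ln w" using assms by auto
  have 1: "(f (exp (ln p)) - f (exp (ln q))) / (ln p - ln q) \<le> (f (exp (ln p)) - f (exp (ln w))) / (ln p - ln w)"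
   and 2: "(f (exp (ln p)) - f (exp (ln w))) / (ln p - ln w) \<le> (f (exp (ln q)) - f (exp (ln w))) / (ln q - ln w)"
    using convex_on_slope_le[OF cvxG, of "ln p" "ln w" "ln q"] lt by auto
  have ex: "exp (ln p) = p" "exp (ln q) = q" "exp (ln w) = w" using assms by auto
  have e1: "(f p - f q) / (ln p - ln q) = (f q - f p) / (ln q - ln p)"
    using lt by (simp add: field_simps)
  have e2: "(f p - f w) / (ln p - ln w) = (f w - f p) / (ln w - ln p)"
    using lt by (simp add: field_simps)
  have e3: "(f q - f w) / (ln q - ln w) = (f w - f q) / (ln w - ln q)"
    using lt by (simp add: field_simps)
  show "(f q - f p) / (ln q - ln p) \<le> (f w - f p) / (ln w - ln p)" using 1 unfolding ex e1 e2 .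
  show "(f w - f p) / (ln w - ln p) \<le> (f w - f q) / (ln w - ln q)" using 2 unfolding ex e2 e3 .
qed

lemma lnb1: "0 < (t::real) \<Longrightarrow> t < b \<Longrightarrow> (b - t) / b \<le> ln b - ln t"
proof -
  assume "0 < t" "t < b"
  then have "ln (t / b) \<le> t / b - 1" using ln_le_minus_one[of "t / b"] by simp
  moreover have "ln (t / b) = ln t - ln b" using \<open>0 < t\<close> \<open>t < b\<close> by (simp add: ln_div)
  moreover have "t / b - 1 = - ((b - t) / b)" using \<open>0 < t\<close> \<open>t < b\<close> by (simp add: field_simps)
  ultimately show ?thesis by simp
qed

lemma lnb2: "0 < (t::real) \<Longrightarrow> t < a \<Longrightarrow> ln a - ln t \<le> (a - t) / t"
proof -
  assume "0 < t" "t < a"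
  then have "ln (a / t) \<le> a / t - 1" using ln_le_minus_one[of "a / t"] by simp
  moreover have "ln (a / t) = ln a - ln t" using \<open>0 < t\<close> \<open>t < a\<close> by (simp add: ln_div)
  moreover have "a / t - 1 = (a - t) / t" using \<open>0 < t\<close> by (simp add: field_simps)
  ultimately show ?thesis by simp
qed

lemma KI:
  assumes ab: "0 < a" "a < b"
  shows "a * lder f a \<le> b * lder f b"
proof -
  define S where "S = (f b - f a) / (ln b - ln a)"
  have S0: "0 < S" using ab smono[of a b] by (simp add: S_def)
  have gb: "(f b - f t) / (ln b - ln t) \<le> b * ((f b - f t) / (b - t))" if t: "0 < t" "t < b" for t
  proof -
    have D: "0 \<le> f b - f t" using smono[of t b] t by simp
    have L: "0 < (b - t) / b" "(b - t) / b \<le> ln b - ln t" using lnb1[OF t] t by auto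
    have "(f b - f t) / (ln b - ln t) \<le> (f b - f t) / ((b - t) / b)"
      by (rule frac_le) (use D L in auto)
    also have "\<dots> = b * ((f b - f t) / (b - t))" using t by (simp add: field_simps)
    finally show ?thesis .
  qed
  have up: "S \<le> b * ((f b - f t) / (b - t))" if t: "0 < t" "t < b" for t
  proof (cases t a rule: linorder_cases)
    case less
    have "S \<le> b * ((f b - f a) / (b - a))" unfolding S_def using gb[of a] ab by simp
    also have "\<dots> \<le> b * ((f b - f t) / (b - t))"
      using CS(1)[of t a b] less t ab by (intro mult_left_mono) auto
    finally show ?thesis .
  next
    case equal then show ?thesis unfolding S_def using gb[of a] ab by simp
  next
    case greater
    have "S \<le> (f b - f t) / (ln b - ln t)" unfolding S_def using Gsl(2)[of a t b] greater t ab by simp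
    also have "\<dots> \<le> b * ((f b - f t) / (b - t))" using gb t by blast
    finally show ?thesis .
  qed
  have "S / b \<le> lder f b"
  proof -
    have "S / b \<le> Inf ((\<lambda>t. (f b - f t) / (b - t)) ` {0<..<b})"
    proof (rule cInf_greatest)
      show "(\<lambda>t. (f b - f t) / (b - t)) ` {0<..<b} \<noteq> {}" using ab by auto
      fix v assume "v \<in> (\<lambda>t. (f b - f t) / (b - t)) ` {0<..<b}"
      then obtain t where t: "0 < t" "t < b" "v = (f b - f t) / (b - t)" by auto
      show "S / b \<le> v" using up[OF t(1,2)] t ab by (simp add: divide_le_eq mult.commute)
    qed
    then show ?thesis using ab by (simp add: lder_def)
  qed
  then have hb: "S \<le> b * lder f b" using ab by (simp add: divide_le_eq mult.commute)
  have low: "t * lder f a \<le> S" if t: "0 < t" "t < a" for t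
  proof -
    have "lder f a \<le> (f a - f t) / (a - t)" using R1(1)[OF t] .
    then have "t * lder f a \<le> t * ((f a - f t) / (a - t))" using t by (intro mult_left_mono) auto
    also have "\<dots> = (f a - f t) / ((a - t) / t)" using t by (simp add: field_simps)
    also have "\<dots> \<le> (f a - f t) / (ln a - ln t)"
    proof (rule frac_le)
      show "0 \<le> f a - f t" using smono[of t a] t by simp
      show "0 < ln a - ln t" using t by simp
      show "ln a - ln t \<le> (a - t) / t" using lnb2[OF t] .
    qed simp
    also have "\<dots> \<le> (f b - f t) / (ln b - ln t)" using Gsl(1)[of t a b] t ab by simp
    also have "\<dots> \<le> S" unfolding S_def using Gsl(2)[of t a b] t ab by simp
    finally show ?thesis .
  qed
  have ha: "a * lder f a \<le> S"
  proof (rule ccontr)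
    assume "\<not> a * lder f a \<le> S"
    then have gt: "S < a * lder f a" by simp
    have r0: "0 < lder f a" using lder_pos ab by simp
    define t where "t = (a + S / lder f a) / 2"
    have "S / lder f a < a" using gt r0 by (simp add: divide_less_eq mult.commute)
    moreover have "0 < S / lder f a" using S0 r0 by simp
    ultimately have t: "0 < t" "t < a" by (auto simp: t_def)
    have "S < t * lder f a"
    proof -
      have "t * lder f a = (a * lder f a + S) / 2" using r0 by (simp add: t_def field_simps)
      then show ?thesis using gt by simp
    qed
    with low[OF t] show False by simp
  qed
  from ha hb show ?thesis by simp
qed

lemma UB: "\<exists>y\<ge>0. M \<le> f y"
proof -
  define G where "G u = f (exp u)" for u
  have d: "0 < G 1 - G 0" unfolding G_def using smono[of 1 "exp 1"] by simp
  have grow: "G 0 + u * (G 1 - G 0) \<le> G u" if u: "1 < u" for u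
  proof -
    have "(G 0 - G 1) / (0 - 1) \<le> (G 0 - G u) / (0 - u)"
      using convex_on_slope_le(1)[OF cvxG, of 0 u 1] u unfolding G_def by simp
    moreover have "(G 0 - G 1) / (0 - 1) = G 1 - G 0" by simp
    moreover have "(G 0 - G u) / (0 - u) = (G u - G 0) / u" using u by (simp add: field_simps)
    ultimately have "G 1 - G 0 \<le> (G u - G 0) / u" by simp
    then show ?thesis using u by (simp add: le_divide_eq mult.commute)
  qed
  define u where "u = max 2 ((M - G 0) / (G 1 - G 0))"
  have u1: "1 < u" by (simp add: u_def)
  have "M - G 0 \<le> u * (G 1 - G 0)"
  proof -
    have "(M - G 0) / (G 1 - G 0) \<le> u" by (simp add: u_def)
    then show ?thesis using d by (simp add: divide_le_eq)
  qed
  then have "M \<le> G u" using grow[OF u1] by simp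
  then show ?thesis unfolding G_def by (intro exI[of _ "exp u"]) simp
qed

end

definition good_fun :: "(real \<Rightarrow> real) \<Rightarrow> bool" where
  "good_fun F \<longleftrightarrow> strict_mono_on {0..} F \<and> (\<forall>v\<ge>F 0. \<exists>s\<ge>0. F s = v)"

lemma good_lt: "good_fun F \<Longrightarrow> 0 \<le> x \<Longrightarrow> x < y \<Longrightarrow> F x < F y"
  unfolding good_fun_def by (auto simp: strict_mono_on_def)

lemma good_le_iff: "good_fun F \<Longrightarrow> 0 \<le> x \<Longrightarrow> 0 \<le> y \<Longrightarrow> F x \<le> F y \<longleftrightarrow> x \<le> y"
  using good_lt[of F x y] good_lt[of F y x] by (cases x y rule: linorder_cases) auto

lemma good_hit: "good_fun F \<Longrightarrow> F 0 \<le> v \<Longrightarrow> \<exists>s\<ge>0. F s = v"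
  unfolding good_fun_def by auto

lemma good_inv: "good_fun F \<Longrightarrow> 0 \<le> s \<Longrightarrow> inv_into {0..} F (F s) = s"
  unfolding good_fun_def using strict_mono_on_imp_inj_on inv_into_f_f by fastforce

lemma interval_incl:
  assumes P: "good_fun P" and A: "good_fun A" and sg: "0 < \<sigma>"
    and key: "\<And>x y. 0 \<le> x \<Longrightarrow> x \<le> y \<Longrightarrow> (A y - A x) / \<sigma> \<le> P y - P x"
    and x: "0 \<le> x"
  shows "uncertainty_interval P 1 x \<subseteq> uncertainty_interval A \<sigma> x"
proof -
  have Px: "P 0 \<le> P x" using good_le_iff[OF P, of 0 x] x by simp
  have Ax: "A 0 \<le> A x" using good_le_iff[OF A, of 0 x] x by simp
  obtain sU where sU: "0 \<le> sU" "P sU = P x + 1" using good_hit[OF P, of "P x + 1"] Px by auto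
  obtain tU where tU: "0 \<le> tU" "A tU = A x + \<sigma>" using good_hit[OF A, of "A x + \<sigma>"] Ax sg by auto
  obtain sL where sL: "0 \<le> sL" "P sL = max (P 0) (P x - 1)" using good_hit[OF P, of "max (P 0) (P x - 1)"] by auto
  obtain tL where tL: "0 \<le> tL" "A tL = max (A 0) (A x - \<sigma>)" using good_hit[OF A, of "max (A 0) (A x - \<sigma>)"] by auto
  have U: "sU \<le> tU"
  proof (rule ccontr)
    assume "\<not> sU \<le> tU"
    then have lt: "tU < sU" by simp
    have "x \<le> sU" using good_le_iff[OF P, of sU x] sU x by linarith
    from key[OF x this] have "(A sU - A x) / \<sigma> \<le> 1" using sU by simp
    then have "A sU \<le> A tU" using sg tU by (simp add: divide_le_eq)
    then show False using good_le_iff[OF A, of sU tU] lt sU tU by linarith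
  qed
  have L: "tL \<le> sL"
  proof (rule ccontr)
    assume "\<not> tL \<le> sL"
    then have lt: "sL < tL" by simp
    show False
    proof (cases "A x - \<sigma> \<le> A 0")
      case True
      then have "A tL = A 0" using tL by simp
      then have "tL = 0" using good_le_iff[OF A, of tL 0] good_le_iff[OF A, of 0 tL] tL by auto
      then show False using lt sL by simp
    next
      case False
      then have AtL: "A tL = A x - \<sigma>" using tL by simp
      have "tL \<le> x" using good_le_iff[OF A, of x tL] AtL sg tL x by auto
      from key[OF tL(1) this] have "1 \<le> P x - P tL" using AtL sg by simp
      then have "P tL \<le> P sL" using sL by simp
      then show False using good_le_iff[OF P, of tL sL] lt sL tL by linarith
    qed
  qed
  have "inv_into {0..} P (P x + 1) = sU" using good_inv[OF P sU(1)] sU by simp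
  moreover have "inv_into {0..} A (A x + \<sigma>) = tU" using good_inv[OF A tU(1)] tU by simp
  moreover have "inv_into {0..} P (max (P 0) (P x - 1)) = sL" using good_inv[OF P sL(1)] sL by simp
  moreover have "inv_into {0..} A (max (A 0) (A x - \<sigma>)) = tL" using good_inv[OF A tL(1)] tL by simp
  ultimately show ?thesis unfolding uncertainty_interval_def using U L by auto
qed

context nbf begin
lemma good: "good_fun f"
  unfolding good_fun_def
proof (intro conjI allI impI)
  show "strict_mono_on {0..} f" using nf by (simp add: neighbor_function_def)
  fix v assume v: "f 0 \<le> v"
  obtain y where y: "0 \<le> y" "v \<le> f y" using UB by blast
  have "continuous_on {0..y} f" using cont by (rule continuous_on_subset) auto
  from IVT'[OF v y(2) y(1) this] show "\<exists>s\<ge>0. f s = v" by auto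
qed
end

context nbf begin
lemma lder_meas: "lder f \<in> borel_measurable borel"
proof -
  have m1: "mono_on {..0} (\<lambda>s. - lder f s)" by (rule mono_onI) (simp add: lder_def)
  have m2: "mono_on {0<..} (\<lambda>s. - lder f s)" by (rule mono_onI) (use lder_anti in auto)
  have "(\<lambda>s. - lder f s) \<in> borel_measurable borel"
    by (rule borel_measurable_piecewise_mono[of "{{..0}, {0<..}}"]) (use m1 m2 in auto)
  from borel_measurable_uminus[OF this] show ?thesis by simp
qed
end

lemma integral_ge_const:
  fixes u :: "real \<Rightarrow> real"
  assumes I: "u integrable_on {a..b}" and ab: "a \<le> b" and c: "\<And>s. a < s \<Longrightarrow> s \<le> b \<Longrightarrow> c \<le> u s"
  shows "c * (b - a) \<le> integral {a..b} u"
proof -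
  define v where "v s = (if s = a then c else u s)" for s
  have neg: "negligible {a}" by simp
  have eq: "\<And>s. s \<in> {a..b} - {a} \<Longrightarrow> v s = u s" by (simp add: v_def)
  have Iv: "v integrable_on {a..b}" using integrable_spike[OF I neg, of v] eq by auto
  have "integral {a..b} u = integral {a..b} v" using integral_spike[OF neg, of "{a..b}" v u] eq by auto
  moreover have "integral {a..b} (\<lambda>_. c) \<le> integral {a..b} v"
    by (rule integral_le[OF integrable_const_ivl Iv]) (auto simp: v_def c)
  ultimately show ?thesis using ab by (simp add: mult.commute)
qed

lemma integral_inv:
  fixes a b K :: real
  assumes "0 < a" "a \<le> b"
  shows "((\<lambda>s. K * (1 / s)) has_integral (K * (ln b - ln a))) {a..b}"
proof -
  have "((\<lambda>s. 1 / s) has_integral (ln b - ln a)) {a..b}"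
  proof (rule fundamental_theorem_of_calculus[OF assms(2)])
    fix x assume "x \<in> {a..b}"
    then have "0 < x" using assms by auto
    then have "(ln has_real_derivative 1 / x) (at x)" by (rule DERIV_ln_divide)
    then show "(ln has_vector_derivative 1 / x) (at x within {a..b})"
      by (simp add: has_real_derivative_iff_has_vector_derivative has_vector_derivative_at_within)
  qed
  from has_integral_mult_right[OF this, of K] show ?thesis by simp
qed

locale two = A: nbf fA + B: nbf fB for fA fB +
  fixes \<sigma>A \<sigma>B :: real
  assumes sA: "0 < \<sigma>A" and sB: "0 < \<sigma>B"
begin

definition g :: "real \<Rightarrow> real" where "g s = max (lder fA s / \<sigma>A) (lder fB s / \<sigma>B)"
definition P :: "real \<Rightarrow> real" where "P x = integral {0..x} g"

lemma g_nonneg: "0 \<le> g s"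
  using A.lder_nonneg[of s] sA by (simp add: g_def le_max_iff_disj)

lemma g_anti: "0 < a \<Longrightarrow> a \<le> b \<Longrightarrow> g b \<le> g a"
  unfolding g_def using A.lder_anti[of a b] B.lder_anti[of a b] sA sB
  by (intro max.mono divide_right_mono) auto

lemma g_k: assumes "0 < a" "a \<le> b" shows "a * g a \<le> b * g b"
proof -
  have kA: "a * lder fA a \<le> b * lder fB b \<or> True" by simp
  have iA: "a * lder fA a \<le> b * lder fA b" using A.KI[of a b] assms by (cases "a = b") auto
  have iB: "a * lder fB a \<le> b * lder fB b" using B.KI[of a b] assms by (cases "a = b") auto
  have b0: "0 \<le> b" using assms by simp
  have "a * (lder fA a / \<sigma>A) \<le> b * (lder fA b / \<sigma>A)"
    using divide_right_mono[OF iA, of \<sigma>A] sA by simp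
  also have "\<dots> \<le> b * g b" unfolding g_def by (rule mult_left_mono[OF _ b0]) simp
  finally have 1: "a * (lder fA a / \<sigma>A) \<le> b * g b" .
  have "a * (lder fB a / \<sigma>B) \<le> b * (lder fB b / \<sigma>B)"
    using divide_right_mono[OF iB, of \<sigma>B] sB by simp
  also have "\<dots> \<le> b * g b" unfolding g_def by (rule mult_left_mono[OF _ b0]) simp
  finally have 2: "a * (lder fB a / \<sigma>B) \<le> b * g b" .
  have "g a = lder fA a / \<sigma>A \<or> g a = lder fB a / \<sigma>B" by (simp add: g_def max_def)
  then show ?thesis using 1 2 by auto
qed

lemma intA: "0 \<le> x \<Longrightarrow> x \<le> y \<Longrightarrow> ((\<lambda>s. lder fA s / \<sigma>A) has_integral ((fA y - fA x) / \<sigma>A)) {x..y}"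
  using has_integral_divide[OF A.FTC] by blast

lemma intB: "0 \<le> x \<Longrightarrow> x \<le> y \<Longrightarrow> ((\<lambda>s. lder fB s / \<sigma>B) has_integral ((fB y - fB x) / \<sigma>B)) {x..y}"
  using has_integral_divide[OF B.FTC] by blast

lemma g_absint: assumes "0 \<le> x" "x \<le> y" shows "g absolutely_integrable_on {x..y}"
proof -
  have a1: "(\<lambda>s. lder fA s / \<sigma>A) absolutely_integrable_on {x..y}"
    by (rule nonnegative_absolutely_integrable_1) (use intA[OF assms] A.lder_nonneg sA in auto)
  have a2: "(\<lambda>s. lder fB s / \<sigma>B) absolutely_integrable_on {x..y}"
    by (rule nonnegative_absolutely_integrable_1) (use intB[OF assms] B.lder_nonneg sB in auto)
  from absolutely_integrable_max[OF a1 a2] show ?thesis by (simp add: g_def[abs_def])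
qed

lemma g_int: "0 \<le> x \<Longrightarrow> x \<le> y \<Longrightarrow> g integrable_on {x..y}"
  using g_absint absolutely_integrable_on_def by blast

lemma P_diff: assumes "0 \<le> x" "x \<le> y" shows "P y - P x = integral {x..y} g"
  using Henstock_Kurzweil_Integration.integral_combine[where a=0 and c=x and b=y and f=g] g_int[of 0 y] assms
  by (simp add: P_def)

lemma keyA: assumes "0 \<le> x" "x \<le> y" shows "(fA y - fA x) / \<sigma>A \<le> P y - P x"
proof -
  have "(fA y - fA x) / \<sigma>A = integral {x..y} (\<lambda>s. lder fA s / \<sigma>A)"
    by (rule integral_unique[OF intA[OF assms], symmetric])
  also have "\<dots> \<le> integral {x..y} g"
    by (rule integral_le) (use intA[OF assms] g_int[OF assms] in \<open>auto simp: g_def\<close>)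
  finally show ?thesis using P_diff[OF assms] by simp
qed

lemma keyB: assumes "0 \<le> x" "x \<le> y" shows "(fB y - fB x) / \<sigma>B \<le> P y - P x"
proof -
  have "(fB y - fB x) / \<sigma>B = integral {x..y} (\<lambda>s. lder fB s / \<sigma>B)"
    by (rule integral_unique[OF intB[OF assms], symmetric])
  also have "\<dots> \<le> integral {x..y} g"
    by (rule integral_le) (use intB[OF assms] g_int[OF assms] in \<open>auto simp: g_def\<close>)
  finally show ?thesis using P_diff[OF assms] by simp
qed

lemma P0: "P 0 = 0" by (simp add: P_def)

lemma P_smono: assumes "0 \<le> x" "x < y" shows "P x < P y"
proof -
  have "0 < (fA y - fA x) / \<sigma>A" using A.smono[OF assms] sA by simp
  then show ?thesis using keyA[of x y] assms by simp
qed

lemma P_cont_Icc: "0 \<le> y \<Longrightarrow> continuous_on {0..y} P"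
  unfolding P_def[abs_def] by (rule indefinite_integral_continuous_1[OF g_int]) auto

lemma P_cont: "continuous_on {0..} P"
  unfolding continuous_on_eq_continuous_within
proof
  fix x :: real assume x: "x \<in> {0..}"
  have "continuous (at x within {0..x+1}) P"
    using P_cont_Icc[of "x+1"] x by (simp add: continuous_on_eq_continuous_within)
  moreover have "at x within {0..} = at x within {0..x+1}"
    by (rule at_within_nhd[of _ "{..<x+1}"]) auto
  ultimately show "continuous (at x within {0..}) P" by simp
qed

lemma P_good: "good_fun P"
  unfolding good_fun_def
proof (intro conjI allI impI)
  show "strict_mono_on {0..} P" by (rule strict_mono_onI) (use P_smono in auto)
  fix v assume v: "P 0 \<le> v"
  obtain y where y: "0 \<le> y" "fA 0 + \<sigma>A * v \<le> fA y" using A.UB by blast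
  have "v \<le> (fA y - fA 0) / \<sigma>A" using y sA by (simp add: le_divide_eq mult.commute)
  also have "\<dots> \<le> P y" using keyA[of 0 y] y P0 by simp
  finally have "v \<le> P y" .
  from IVT'[OF v this y(1) P_cont_Icc[OF y(1)]] show "\<exists>s\<ge>0. P s = v" by auto
qed

lemma P_conc: "concave_on {0..} P"
proof (rule concave_from_slopes)
  show "convex {0::real..}" by simp
  fix x y z :: real assume xz: "x \<in> {0..}" "z \<in> {0..}" "x < y" "y < z"
  then have x0: "0 \<le> x" and y0: "0 < y" by auto
  have "P z - P y = integral {y..z} g" using P_diff[of y z] xz y0 by simp
  also have "\<dots> \<le> integral {y..z} (\<lambda>_. g y)"
    by (rule integral_le[OF g_int integrable_const_ivl]) (use y0 xz g_anti in auto)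
  also have "\<dots> = (z - y) * g y" using xz by simp
  finally have 1: "(P z - P y) / (z - y) \<le> g y" using xz by (simp add: divide_le_eq mult.commute)
  have "g y * (y - x) \<le> integral {x..y} g"
    by (rule integral_ge_const[OF g_int]) (use x0 xz g_anti in auto)
  also have "\<dots> = P y - P x" using P_diff[of x y] x0 xz by simp
  finally have 2: "g y \<le> (P y - P x) / (y - x)" using xz by (simp add: le_divide_eq)
  from 1 2 show "(P z - P y) / (z - y) \<le> (P y - P x) / (y - x)" by simp
qed

lemma P_exp_conv: "convex_on UNIV (\<lambda>u. P (exp u))"
proof (rule convex_from_slopes)
  show "convex (UNIV :: real set)" by simp
  fix u v w :: real assume uvw: "u \<in> UNIV" "w \<in> UNIV" "u < v" "v < w"
  define a b c where "a = exp u" and "b = exp v" and "c = exp w"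
  have abc: "0 < a" "a < b" "b < c" using uvw by (auto simp: a_def b_def c_def)
  define K where "K = b * g b"
  have "P b - P a = integral {a..b} g" using P_diff[of a b] abc by simp
  also have "\<dots> \<le> integral {a..b} (\<lambda>s. K * (1 / s))"
  proof (rule integral_le[OF g_int])
    show "(\<lambda>s. K * (1 / s)) integrable_on {a..b}" using integral_inv[of a b K] abc by (auto intro: has_integral_integrable)
    fix s assume s: "s \<in> {a..b}"
    then have "0 < s" using abc by auto
    have "s * g s \<le> K" unfolding K_def using g_k[of s b] s \<open>0 < s\<close> by auto
    then show "g s \<le> K * (1 / s)" using \<open>0 < s\<close> by (simp add: le_divide_eq mult.commute)
  qed (use abc in auto)
  also have "\<dots> = K * (v - u)"
    using integral_unique[OF integral_inv[of a b K]] abc by (simp add: a_def b_def)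
  finally have 1: "(P b - P a) / (v - u) \<le> K" using uvw by (simp add: divide_le_eq mult.commute)
  have "K * (w - v) = integral {b..c} (\<lambda>s. K * (1 / s))"
    using integral_unique[OF integral_inv[of b c K]] abc by (simp add: b_def c_def)
  also have "\<dots> \<le> integral {b..c} g"
  proof (rule integral_le[OF _ g_int])
    show "(\<lambda>s. K * (1 / s)) integrable_on {b..c}" using integral_inv[of b c K] abc by (auto intro: has_integral_integrable)
    fix s assume s: "s \<in> {b..c}"
    then have "0 < s" using abc by auto
    have "K \<le> s * g s" unfolding K_def using g_k[of b s] s abc by auto
    then show "K * (1 / s) \<le> g s" using \<open>0 < s\<close> by (simp add: divide_le_eq mult.commute)
  qed (use abc in auto)
  also have "\<dots> = P c - P b" using P_diff[of b c] abc by simp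
  finally have 2: "K \<le> (P c - P b) / (w - v)" using uvw by (simp add: le_divide_eq mult.commute)
  from 1 2 show "(P (exp v) - P (exp u)) / (v - u) \<le> (P (exp w) - P (exp v)) / (w - v)"
    by (simp add: a_def b_def c_def)
qed

end

context two begin

lemma g_meas: "g \<in> borel_measurable borel"
  unfolding g_def[abs_def] using A.lder_meas B.lder_meas by measurable

lemma ps_eq: assumes x: "0 \<le> x" shows "psi_star fA \<sigma>A fB \<sigma>B x = P x"
proof -
  define h where "h s = max (deriv fA s / \<sigma>A) (deriv fB s / \<sigma>B)" for s
  have hg: "h s = g s" if "0 < s" "s \<notin> A.bad \<union> B.bad" for s
    using that A.good_deriv_eq[of s] B.good_deriv_eq[of s] by (simp add: h_def g_def)
  have 1: "(LINT s|lborel. indicator {0<..<x} s *\<^sub>R h s) = (LINT s|lborel. indicator {0<..<x} s *\<^sub>R g s)"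
    by (rule integral_discrete_difference[where X="A.bad \<union> B.bad"])
       (auto simp: A.bad_countable B.bad_countable hg indicator_def)
  have "psi_star fA \<sigma>A fB \<sigma>B x = (LBINT s=0..x. g s)"
  proof -
    have ei: "einterval 0 (ereal x) = {0<..<x}" by (auto simp: einterval_def)
    show ?thesis
      using 1 x unfolding psi_star_def h_def[symmetric] interval_lebesgue_integral_def set_lebesgue_integral_def ei
      by simp
  qed
  also have "\<dots> = integral {0..x} g"
  proof -
    have ai: "g absolutely_integrable_on {0..x}" using g_absint[OF order_refl x] .
    have gm: "g \<in> borel_measurable lborel" using g_meas by simp
    have meas: "(\<lambda>s. indicator {0..x} s *\<^sub>R g s) \<in> borel_measurable lborel"
      by (intro borel_measurable_scaleR borel_measurable_indicator gm) simp
    have "integrable lebesgue (\<lambda>s. indicator {0..x} s *\<^sub>R g s)"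
      using ai unfolding set_integrable_def .
    then have si: "set_integrable lborel {0..x} g"
      unfolding set_integrable_def by (rule integrable_completion[OF meas, THEN iffD1])
    have "(LBINT s=ereal 0..ereal x. g s) = integral {0..x} g"
      by (rule interval_integral_eq_integral[OF x si])
    then show ?thesis by (metis zero_ereal_def)
  qed
  finally show ?thesis by (simp add: P_def)
qed

lemma ps_neighbor: "neighbor_function (psi_star fA \<sigma>A fB \<sigma>B)"
proof -
  let ?Q = "psi_star fA \<sigma>A fB \<sigma>B"
  have eq: "\<And>x. x \<in> {0..} \<Longrightarrow> ?Q x = P x" using ps_eq by simp
  have "strict_mono_on {0..} ?Q"
    by (rule strict_mono_onI) (use P_smono eq in auto)
  moreover have "continuous_on {0..} ?Q"
    by (rule iffD2[OF continuous_on_cong[OF refl eq] P_cont])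
  moreover have "concave_on {0..} ?Q"
  proof (rule concave_on_linorderI)
    show "convex {0::real..}" by simp
    fix t x y :: real assume t: "0 < t" "t < 1" and xy: "x \<in> {0..}" "y \<in> {0..}" "x < y"
    have m: "(1 - t) *\<^sub>R x + t *\<^sub>R y \<in> {0..}" using t xy by simp
    have "(1 - t) * P x + t * P y \<le> P ((1 - t) *\<^sub>R x + t *\<^sub>R y)"
      by (rule concave_onD[OF P_conc]) (use t xy in auto)
    then show "(1 - t) * ?Q x + t * ?Q y \<le> ?Q ((1 - t) *\<^sub>R x + t *\<^sub>R y)"
      using eq[OF m] eq[OF xy(1)] eq[OF xy(2)] by simp
  qed
  moreover have "convex_on UNIV (\<lambda>x. ?Q (exp x))"
  proof -
    have "(\<lambda>x. ?Q (exp x)) = (\<lambda>x. P (exp x))" using ps_eq by (simp add: less_imp_le)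
    then show ?thesis using P_exp_conv by simp
  qed
  ultimately show ?thesis unfolding neighbor_function_def by blast
qed

lemma ps_good: "good_fun (psi_star fA \<sigma>A fB \<sigma>B)"
proof -
  have eq: "\<And>x. 0 \<le> x \<Longrightarrow> psi_star fA \<sigma>A fB \<sigma>B x = P x" using ps_eq by simp
  show ?thesis unfolding good_fun_def
  proof (intro conjI allI impI)
    show "strict_mono_on {0..} (psi_star fA \<sigma>A fB \<sigma>B)"
      by (rule strict_mono_onI) (use P_smono eq in auto)
    fix v assume "psi_star fA \<sigma>A fB \<sigma>B 0 \<le> v"
    then have "P 0 \<le> v" using eq[of 0] by simp
    then obtain s where "0 \<le> s" "P s = v" using good_hit[OF P_good] by blast
    then show "\<exists>s\<ge>0. psi_star fA \<sigma>A fB \<sigma>B s = v" using eq by auto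
  qed
qed

lemma ps_keyA: "0 \<le> x \<Longrightarrow> x \<le> y \<Longrightarrow> (fA y - fA x) / \<sigma>A \<le> psi_star fA \<sigma>A fB \<sigma>B y - psi_star fA \<sigma>A fB \<sigma>B x"
  using keyA ps_eq by simp

lemma ps_keyB: "0 \<le> x \<Longrightarrow> x \<le> y \<Longrightarrow> (fB y - fB x) / \<sigma>B \<le> psi_star fA \<sigma>A fB \<sigma>B y - psi_star fA \<sigma>A fB \<sigma>B x"
  using keyB ps_eq by simp

end

theorem theorem5p8:
  fixes \<psi>A \<psi>B :: "real \<Rightarrow> real" and \<sigma>A \<sigma>B :: real
  assumes "neighbor_function \<psi>A" and "neighbor_function \<psi>B"
    and "\<sigma>A > 0" and "\<sigma>B > 0"
  shows "C1_ae \<psi>A \<and> C1_ae \<psi>B \<and>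
         neighbor_function (psi_star \<psi>A \<sigma>A \<psi>B \<sigma>B) \<and>
         (\<forall>x\<ge>0. uncertainty_interval (psi_star \<psi>A \<sigma>A \<psi>B \<sigma>B) 1 x \<subseteq> uncertainty_interval \<psi>A \<sigma>A x
               \<and> uncertainty_interval (psi_star \<psi>A \<sigma>A \<psi>B \<sigma>B) 1 x \<subseteq> uncertainty_interval \<psi>B \<sigma>B x)"
proof -
  interpret A: nbf \<psi>A by unfold_locales (rule assms(1))
  interpret B: nbf \<psi>B by unfold_locales (rule assms(2))
  interpret T: two \<psi>A \<psi>B \<sigma>A \<sigma>B by unfold_locales (use assms in auto)
  show ?thesis
  proof (intro conjI allI impI)
    show "C1_ae \<psi>A" by (rule A.C1)
    show "C1_ae \<psi>B" by (rule B.C1)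
    show "neighbor_function (psi_star \<psi>A \<sigma>A \<psi>B \<sigma>B)" by (rule T.ps_neighbor)
    fix x :: real assume x: "0 \<le> x"
    show "uncertainty_interval (psi_star \<psi>A \<sigma>A \<psi>B \<sigma>B) 1 x \<subseteq> uncertainty_interval \<psi>A \<sigma>A x"
      by (rule interval_incl[OF T.ps_good A.good assms(3) T.ps_keyA x])
    show "uncertainty_interval (psi_star \<psi>A \<sigma>A \<psi>B \<sigma>B) 1 x \<subseteq> uncertainty_interval \<psi>B \<sigma>B x"
      by (rule interval_incl[OF T.ps_good B.good assms(4) T.ps_keyB x])
  qed
qed

end
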